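(* $\psi_{d,\min}(\mathrm{KG}(6,2))=3$.
   Context: $\mathrm{KG}(6,2)$ is the Kneser graph whose vertices are the $2$-element subsets of $\{1,\dots,6\}$, two being adjacent iff disjoint. For a digraph $D$, let $N_+[v]=\{v\}\cup\{u:(v,u)\in E(D)\}$ and for a coloring $c$, $c(U)=\{c(u):u\in U\}$. The directed local chromatic number is $\psi_d(D)=\min_c\max_{v\in V(D)}|c(N_+[v])|$, the minimum over proper colorings $c$ of the underlying undirected graph. For an undirected graph $G$, $\psi_{d,\min}(G)$ is the minimum of $\psi_d(\vec G)$ over all orientations $\vec G$ of $G$ (each edge given exactly one direction). *)

theory Defs
  imports Main
begin

(* Digraphs are given by a vertex set V and an arc set A \<subseteq> V \<times> V.
   Undirected graphs are given by a vertex set V and a symmetric, irreflexive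
   adjacency relation E. *)

definition out_closed_nbhd :: "('a \<times> 'a) set \<Rightarrow> 'a \<Rightarrow> 'a set" where
  "out_closed_nbhd A v = {v} \<union> {u. (v, u) \<in> A}"

definition proper_coloring_digraph :: "'a set \<Rightarrow> ('a \<times> 'a) set \<Rightarrow> ('a \<Rightarrow> nat) \<Rightarrow> bool" where
  "proper_coloring_digraph V A c \<longleftrightarrow>
     (\<forall>u\<in>V. \<forall>v\<in>V. ((u, v) \<in> A \<or> (v, u) \<in> A) \<longrightarrow> c u \<noteq> c v)"

definition psi_d :: "'a set \<Rightarrow> ('a \<times> 'a) set \<Rightarrow> nat" where
  "psi_d V A = (LEAST k. \<exists>c. proper_coloring_digraph V A c \<and>
                          (\<forall>v\<in>V. card (c ` out_closed_nbhd A v) \<le> k))"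

definition is_orientation :: "'a set \<Rightarrow> ('a \<Rightarrow> 'a \<Rightarrow> bool) \<Rightarrow> ('a \<times> 'a) set \<Rightarrow> bool" where
  "is_orientation V E A \<longleftrightarrow>
     A \<subseteq> {(u, v). u \<in> V \<and> v \<in> V \<and> E u v} \<and>
     (\<forall>u\<in>V. \<forall>v\<in>V. E u v \<longrightarrow> ((u, v) \<in> A \<longleftrightarrow> (v, u) \<notin> A))"

definition psi_d_min :: "'a set \<Rightarrow> ('a \<Rightarrow> 'a \<Rightarrow> bool) \<Rightarrow> nat" where
  "psi_d_min V E = (LEAST k. \<exists>A. is_orientation V E A \<and> psi_d V A = k)"

definition kneser_vertices :: "nat \<Rightarrow> nat \<Rightarrow> nat set set" where
  "kneser_vertices n k = {S. S \<subseteq> {1..n} \<and> card S = k}"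

definition kneser_adj :: "nat set \<Rightarrow> nat set \<Rightarrow> bool" where
  "kneser_adj S T \<longleftrightarrow> S \<inter> T = {}"

end

theory Submission
  imports Defs
begin

lemma big:
  fixes c :: "'a \<Rightarrow> nat" and P :: "'a \<Rightarrow> 'a \<Rightarrow> bool"
  assumes h1: "P xab xcd \<or> P xcd xab"
    "P xab xce \<or> P xce xab"
    "P xab xcf \<or> P xcf xab"
    "P xab xde \<or> P xde xab"
    "P xab xdf \<or> P xdf xab"
    "P xab xef \<or> P xef xab"
    "P xac xbd \<or> P xbd xac"
    "P xac xbe \<or> P xbe xac"
    "P xac xbf \<or> P xbf xac"
    "P xac xde \<or> P xde xac"
    "P xac xdf \<or> P xdf xac"
    "P xac xef \<or> P xef xac"
    "P xad xbc \<or> P xbc xad"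
    "P xad xbe \<or> P xbe xad"
    "P xad xbf \<or> P xbf xad"
    "P xad xce \<or> P xce xad"
    "P xad xcf \<or> P xcf xad"
    "P xad xef \<or> P xef xad"
    "P xae xbc \<or> P xbc xae"
    "P xae xbd \<or> P xbd xae"
    "P xae xbf \<or> P xbf xae"
    "P xae xcd \<or> P xcd xae"
    "P xae xcf \<or> P xcf xae"
    "P xae xdf \<or> P xdf xae"
    "P xaf xbc \<or> P xbc xaf"
    "P xaf xbd \<or> P xbd xaf"
    "P xaf xbe \<or> P xbe xaf"
    "P xaf xcd \<or> P xcd xaf"
    "P xaf xce \<or> P xce xaf"
    "P xaf xde \<or> P xde xaf"
    "P xbc xde \<or> P xde xbc"
    "P xbc xdf \<or> P xdf xbc"
    "P xbc xef \<or> P xef xbc"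
    "P xbd xce \<or> P xce xbd"
    "P xbd xcf \<or> P xcf xbd"
    "P xbd xef \<or> P xef xbd"
    "P xbe xcd \<or> P xcd xbe"
    "P xbe xcf \<or> P xcf xbe"
    "P xbe xdf \<or> P xdf xbe"
    "P xbf xcd \<or> P xcd xbf"
    "P xbf xce \<or> P xce xbf"
    "P xbf xde \<or> P xde xbf"
    "P xcd xef \<or> P xef xcd"
    "P xce xdf \<or> P xdf xce"
    "P xcf xde \<or> P xde xcf"
  and h2: "c xab \<noteq> c xcd"
    "c xab \<noteq> c xce"
    "c xab \<noteq> c xcf"
    "c xab \<noteq> c xde"
    "c xab \<noteq> c xdf"
    "c xab \<noteq> c xef"
    "c xac \<noteq> c xbd"
    "c xac \<noteq> c xbe"
    "c xac \<noteq> c xbf"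
    "c xac \<noteq> c xde"
    "c xac \<noteq> c xdf"
    "c xac \<noteq> c xef"
    "c xad \<noteq> c xbc"
    "c xad \<noteq> c xbe"
    "c xad \<noteq> c xbf"
    "c xad \<noteq> c xce"
    "c xad \<noteq> c xcf"
    "c xad \<noteq> c xef"
    "c xae \<noteq> c xbc"
    "c xae \<noteq> c xbd"
    "c xae \<noteq> c xbf"
    "c xae \<noteq> c xcd"
    "c xae \<noteq> c xcf"
    "c xae \<noteq> c xdf"
    "c xaf \<noteq> c xbc"
    "c xaf \<noteq> c xbd"
    "c xaf \<noteq> c xbe"
    "c xaf \<noteq> c xcd"
    "c xaf \<noteq> c xce"
    "c xaf \<noteq> c xde"
    "c xbc \<noteq> c xde"
    "c xbc \<noteq> c xdf"
    "c xbc \<noteq> c xef"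
    "c xbd \<noteq> c xce"
    "c xbd \<noteq> c xcf"
    "c xbd \<noteq> c xef"
    "c xbe \<noteq> c xcd"
    "c xbe \<noteq> c xcf"
    "c xbe \<noteq> c xdf"
    "c xbf \<noteq> c xcd"
    "c xbf \<noteq> c xce"
    "c xbf \<noteq> c xde"
    "c xcd \<noteq> c xef"
    "c xce \<noteq> c xdf"
    "c xcf \<noteq> c xde"
  and h3: "P xab xcd \<Longrightarrow> P xab xce \<Longrightarrow> c xcd = c xce"
    "P xab xcd \<Longrightarrow> P xab xcf \<Longrightarrow> c xcd = c xcf"
    "P xab xcd \<Longrightarrow> P xab xde \<Longrightarrow> c xcd = c xde"
    "P xab xcd \<Longrightarrow> P xab xdf \<Longrightarrow> c xcd = c xdf"
    "P xab xcd \<Longrightarrow> P xab xef \<Longrightarrow> c xcd = c xef"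
    "P xab xce \<Longrightarrow> P xab xcf \<Longrightarrow> c xce = c xcf"
    "P xab xce \<Longrightarrow> P xab xde \<Longrightarrow> c xce = c xde"
    "P xab xce \<Longrightarrow> P xab xdf \<Longrightarrow> c xce = c xdf"
    "P xab xce \<Longrightarrow> P xab xef \<Longrightarrow> c xce = c xef"
    "P xab xcf \<Longrightarrow> P xab xde \<Longrightarrow> c xcf = c xde"
    "P xab xcf \<Longrightarrow> P xab xdf \<Longrightarrow> c xcf = c xdf"
    "P xab xcf \<Longrightarrow> P xab xef \<Longrightarrow> c xcf = c xef"
    "P xab xde \<Longrightarrow> P xab xdf \<Longrightarrow> c xde = c xdf"
    "P xab xde \<Longrightarrow> P xab xef \<Longrightarrow> c xde = c xef"
    "P xab xdf \<Longrightarrow> P xab xef \<Longrightarrow> c xdf = c xef"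
    "P xac xbd \<Longrightarrow> P xac xbe \<Longrightarrow> c xbd = c xbe"
    "P xac xbd \<Longrightarrow> P xac xbf \<Longrightarrow> c xbd = c xbf"
    "P xac xbd \<Longrightarrow> P xac xde \<Longrightarrow> c xbd = c xde"
    "P xac xbd \<Longrightarrow> P xac xdf \<Longrightarrow> c xbd = c xdf"
    "P xac xbd \<Longrightarrow> P xac xef \<Longrightarrow> c xbd = c xef"
    "P xac xbe \<Longrightarrow> P xac xbf \<Longrightarrow> c xbe = c xbf"
    "P xac xbe \<Longrightarrow> P xac xde \<Longrightarrow> c xbe = c xde"
    "P xac xbe \<Longrightarrow> P xac xdf \<Longrightarrow> c xbe = c xdf"
    "P xac xbe \<Longrightarrow> P xac xef \<Longrightarrow> c xbe = c xef"
    "P xac xbf \<Longrightarrow> P xac xde \<Longrightarrow> c xbf = c xde"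
    "P xac xbf \<Longrightarrow> P xac xdf \<Longrightarrow> c xbf = c xdf"
    "P xac xbf \<Longrightarrow> P xac xef \<Longrightarrow> c xbf = c xef"
    "P xac xde \<Longrightarrow> P xac xdf \<Longrightarrow> c xde = c xdf"
    "P xac xde \<Longrightarrow> P xac xef \<Longrightarrow> c xde = c xef"
    "P xac xdf \<Longrightarrow> P xac xef \<Longrightarrow> c xdf = c xef"
    "P xad xbc \<Longrightarrow> P xad xbe \<Longrightarrow> c xbc = c xbe"
    "P xad xbc \<Longrightarrow> P xad xbf \<Longrightarrow> c xbc = c xbf"
    "P xad xbc \<Longrightarrow> P xad xce \<Longrightarrow> c xbc = c xce"
    "P xad xbc \<Longrightarrow> P xad xcf \<Longrightarrow> c xbc = c xcf"
    "P xad xbc \<Longrightarrow> P xad xef \<Longrightarrow> c xbc = c xef"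
    "P xad xbe \<Longrightarrow> P xad xbf \<Longrightarrow> c xbe = c xbf"
    "P xad xbe \<Longrightarrow> P xad xce \<Longrightarrow> c xbe = c xce"
    "P xad xbe \<Longrightarrow> P xad xcf \<Longrightarrow> c xbe = c xcf"
    "P xad xbe \<Longrightarrow> P xad xef \<Longrightarrow> c xbe = c xef"
    "P xad xbf \<Longrightarrow> P xad xce \<Longrightarrow> c xbf = c xce"
    "P xad xbf \<Longrightarrow> P xad xcf \<Longrightarrow> c xbf = c xcf"
    "P xad xbf \<Longrightarrow> P xad xef \<Longrightarrow> c xbf = c xef"
    "P xad xce \<Longrightarrow> P xad xcf \<Longrightarrow> c xce = c xcf"
    "P xad xce \<Longrightarrow> P xad xef \<Longrightarrow> c xce = c xef"
    "P xad xcf \<Longrightarrow> P xad xef \<Longrightarrow> c xcf = c xef"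
    "P xae xbc \<Longrightarrow> P xae xbd \<Longrightarrow> c xbc = c xbd"
    "P xae xbc \<Longrightarrow> P xae xbf \<Longrightarrow> c xbc = c xbf"
    "P xae xbc \<Longrightarrow> P xae xcd \<Longrightarrow> c xbc = c xcd"
    "P xae xbc \<Longrightarrow> P xae xcf \<Longrightarrow> c xbc = c xcf"
    "P xae xbc \<Longrightarrow> P xae xdf \<Longrightarrow> c xbc = c xdf"
    "P xae xbd \<Longrightarrow> P xae xbf \<Longrightarrow> c xbd = c xbf"
    "P xae xbd \<Longrightarrow> P xae xcd \<Longrightarrow> c xbd = c xcd"
    "P xae xbd \<Longrightarrow> P xae xcf \<Longrightarrow> c xbd = c xcf"
    "P xae xbd \<Longrightarrow> P xae xdf \<Longrightarrow> c xbd = c xdf"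
    "P xae xbf \<Longrightarrow> P xae xcd \<Longrightarrow> c xbf = c xcd"
    "P xae xbf \<Longrightarrow> P xae xcf \<Longrightarrow> c xbf = c xcf"
    "P xae xbf \<Longrightarrow> P xae xdf \<Longrightarrow> c xbf = c xdf"
    "P xae xcd \<Longrightarrow> P xae xcf \<Longrightarrow> c xcd = c xcf"
    "P xae xcd \<Longrightarrow> P xae xdf \<Longrightarrow> c xcd = c xdf"
    "P xae xcf \<Longrightarrow> P xae xdf \<Longrightarrow> c xcf = c xdf"
    "P xaf xbc \<Longrightarrow> P xaf xbd \<Longrightarrow> c xbc = c xbd"
    "P xaf xbc \<Longrightarrow> P xaf xbe \<Longrightarrow> c xbc = c xbe"
    "P xaf xbc \<Longrightarrow> P xaf xcd \<Longrightarrow> c xbc = c xcd"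
    "P xaf xbc \<Longrightarrow> P xaf xce \<Longrightarrow> c xbc = c xce"
    "P xaf xbc \<Longrightarrow> P xaf xde \<Longrightarrow> c xbc = c xde"
    "P xaf xbd \<Longrightarrow> P xaf xbe \<Longrightarrow> c xbd = c xbe"
    "P xaf xbd \<Longrightarrow> P xaf xcd \<Longrightarrow> c xbd = c xcd"
    "P xaf xbd \<Longrightarrow> P xaf xce \<Longrightarrow> c xbd = c xce"
    "P xaf xbd \<Longrightarrow> P xaf xde \<Longrightarrow> c xbd = c xde"
    "P xaf xbe \<Longrightarrow> P xaf xcd \<Longrightarrow> c xbe = c xcd"
    "P xaf xbe \<Longrightarrow> P xaf xce \<Longrightarrow> c xbe = c xce"
    "P xaf xbe \<Longrightarrow> P xaf xde \<Longrightarrow> c xbe = c xde"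
    "P xaf xcd \<Longrightarrow> P xaf xce \<Longrightarrow> c xcd = c xce"
    "P xaf xcd \<Longrightarrow> P xaf xde \<Longrightarrow> c xcd = c xde"
    "P xaf xce \<Longrightarrow> P xaf xde \<Longrightarrow> c xce = c xde"
    "P xbc xad \<Longrightarrow> P xbc xae \<Longrightarrow> c xad = c xae"
    "P xbc xad \<Longrightarrow> P xbc xaf \<Longrightarrow> c xad = c xaf"
    "P xbc xad \<Longrightarrow> P xbc xde \<Longrightarrow> c xad = c xde"
    "P xbc xad \<Longrightarrow> P xbc xdf \<Longrightarrow> c xad = c xdf"
    "P xbc xad \<Longrightarrow> P xbc xef \<Longrightarrow> c xad = c xef"
    "P xbc xae \<Longrightarrow> P xbc xaf \<Longrightarrow> c xae = c xaf"
    "P xbc xae \<Longrightarrow> P xbc xde \<Longrightarrow> c xae = c xde"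
    "P xbc xae \<Longrightarrow> P xbc xdf \<Longrightarrow> c xae = c xdf"
    "P xbc xae \<Longrightarrow> P xbc xef \<Longrightarrow> c xae = c xef"
    "P xbc xaf \<Longrightarrow> P xbc xde \<Longrightarrow> c xaf = c xde"
    "P xbc xaf \<Longrightarrow> P xbc xdf \<Longrightarrow> c xaf = c xdf"
    "P xbc xaf \<Longrightarrow> P xbc xef \<Longrightarrow> c xaf = c xef"
    "P xbc xde \<Longrightarrow> P xbc xdf \<Longrightarrow> c xde = c xdf"
    "P xbc xde \<Longrightarrow> P xbc xef \<Longrightarrow> c xde = c xef"
    "P xbc xdf \<Longrightarrow> P xbc xef \<Longrightarrow> c xdf = c xef"
    "P xbd xac \<Longrightarrow> P xbd xae \<Longrightarrow> c xac = c xae"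
    "P xbd xac \<Longrightarrow> P xbd xaf \<Longrightarrow> c xac = c xaf"
    "P xbd xac \<Longrightarrow> P xbd xce \<Longrightarrow> c xac = c xce"
    "P xbd xac \<Longrightarrow> P xbd xcf \<Longrightarrow> c xac = c xcf"
    "P xbd xac \<Longrightarrow> P xbd xef \<Longrightarrow> c xac = c xef"
    "P xbd xae \<Longrightarrow> P xbd xaf \<Longrightarrow> c xae = c xaf"
    "P xbd xae \<Longrightarrow> P xbd xce \<Longrightarrow> c xae = c xce"
    "P xbd xae \<Longrightarrow> P xbd xcf \<Longrightarrow> c xae = c xcf"
    "P xbd xae \<Longrightarrow> P xbd xef \<Longrightarrow> c xae = c xef"
    "P xbd xaf \<Longrightarrow> P xbd xce \<Longrightarrow> c xaf = c xce"
    "P xbd xaf \<Longrightarrow> P xbd xcf \<Longrightarrow> c xaf = c xcf"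
    "P xbd xaf \<Longrightarrow> P xbd xef \<Longrightarrow> c xaf = c xef"
    "P xbd xce \<Longrightarrow> P xbd xcf \<Longrightarrow> c xce = c xcf"
    "P xbd xce \<Longrightarrow> P xbd xef \<Longrightarrow> c xce = c xef"
    "P xbd xcf \<Longrightarrow> P xbd xef \<Longrightarrow> c xcf = c xef"
    "P xbe xac \<Longrightarrow> P xbe xad \<Longrightarrow> c xac = c xad"
    "P xbe xac \<Longrightarrow> P xbe xaf \<Longrightarrow> c xac = c xaf"
    "P xbe xac \<Longrightarrow> P xbe xcd \<Longrightarrow> c xac = c xcd"
    "P xbe xac \<Longrightarrow> P xbe xcf \<Longrightarrow> c xac = c xcf"
    "P xbe xac \<Longrightarrow> P xbe xdf \<Longrightarrow> c xac = c xdf"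
    "P xbe xad \<Longrightarrow> P xbe xaf \<Longrightarrow> c xad = c xaf"
    "P xbe xad \<Longrightarrow> P xbe xcd \<Longrightarrow> c xad = c xcd"
    "P xbe xad \<Longrightarrow> P xbe xcf \<Longrightarrow> c xad = c xcf"
    "P xbe xad \<Longrightarrow> P xbe xdf \<Longrightarrow> c xad = c xdf"
    "P xbe xaf \<Longrightarrow> P xbe xcd \<Longrightarrow> c xaf = c xcd"
    "P xbe xaf \<Longrightarrow> P xbe xcf \<Longrightarrow> c xaf = c xcf"
    "P xbe xaf \<Longrightarrow> P xbe xdf \<Longrightarrow> c xaf = c xdf"
    "P xbe xcd \<Longrightarrow> P xbe xcf \<Longrightarrow> c xcd = c xcf"
    "P xbe xcd \<Longrightarrow> P xbe xdf \<Longrightarrow> c xcd = c xdf"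
    "P xbe xcf \<Longrightarrow> P xbe xdf \<Longrightarrow> c xcf = c xdf"
    "P xbf xac \<Longrightarrow> P xbf xad \<Longrightarrow> c xac = c xad"
    "P xbf xac \<Longrightarrow> P xbf xae \<Longrightarrow> c xac = c xae"
    "P xbf xac \<Longrightarrow> P xbf xcd \<Longrightarrow> c xac = c xcd"
    "P xbf xac \<Longrightarrow> P xbf xce \<Longrightarrow> c xac = c xce"
    "P xbf xac \<Longrightarrow> P xbf xde \<Longrightarrow> c xac = c xde"
    "P xbf xad \<Longrightarrow> P xbf xae \<Longrightarrow> c xad = c xae"
    "P xbf xad \<Longrightarrow> P xbf xcd \<Longrightarrow> c xad = c xcd"
    "P xbf xad \<Longrightarrow> P xbf xce \<Longrightarrow> c xad = c xce"
    "P xbf xad \<Longrightarrow> P xbf xde \<Longrightarrow> c xad = c xde"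
    "P xbf xae \<Longrightarrow> P xbf xcd \<Longrightarrow> c xae = c xcd"
    "P xbf xae \<Longrightarrow> P xbf xce \<Longrightarrow> c xae = c xce"
    "P xbf xae \<Longrightarrow> P xbf xde \<Longrightarrow> c xae = c xde"
    "P xbf xcd \<Longrightarrow> P xbf xce \<Longrightarrow> c xcd = c xce"
    "P xbf xcd \<Longrightarrow> P xbf xde \<Longrightarrow> c xcd = c xde"
    "P xbf xce \<Longrightarrow> P xbf xde \<Longrightarrow> c xce = c xde"
    "P xcd xab \<Longrightarrow> P xcd xae \<Longrightarrow> c xab = c xae"
    "P xcd xab \<Longrightarrow> P xcd xaf \<Longrightarrow> c xab = c xaf"
    "P xcd xab \<Longrightarrow> P xcd xbe \<Longrightarrow> c xab = c xbe"
    "P xcd xab \<Longrightarrow> P xcd xbf \<Longrightarrow> c xab = c xbf"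
    "P xcd xab \<Longrightarrow> P xcd xef \<Longrightarrow> c xab = c xef"
    "P xcd xae \<Longrightarrow> P xcd xaf \<Longrightarrow> c xae = c xaf"
    "P xcd xae \<Longrightarrow> P xcd xbe \<Longrightarrow> c xae = c xbe"
    "P xcd xae \<Longrightarrow> P xcd xbf \<Longrightarrow> c xae = c xbf"
    "P xcd xae \<Longrightarrow> P xcd xef \<Longrightarrow> c xae = c xef"
    "P xcd xaf \<Longrightarrow> P xcd xbe \<Longrightarrow> c xaf = c xbe"
    "P xcd xaf \<Longrightarrow> P xcd xbf \<Longrightarrow> c xaf = c xbf"
    "P xcd xaf \<Longrightarrow> P xcd xef \<Longrightarrow> c xaf = c xef"
    "P xcd xbe \<Longrightarrow> P xcd xbf \<Longrightarrow> c xbe = c xbf"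
    "P xcd xbe \<Longrightarrow> P xcd xef \<Longrightarrow> c xbe = c xef"
    "P xcd xbf \<Longrightarrow> P xcd xef \<Longrightarrow> c xbf = c xef"
    "P xce xab \<Longrightarrow> P xce xad \<Longrightarrow> c xab = c xad"
    "P xce xab \<Longrightarrow> P xce xaf \<Longrightarrow> c xab = c xaf"
    "P xce xab \<Longrightarrow> P xce xbd \<Longrightarrow> c xab = c xbd"
    "P xce xab \<Longrightarrow> P xce xbf \<Longrightarrow> c xab = c xbf"
    "P xce xab \<Longrightarrow> P xce xdf \<Longrightarrow> c xab = c xdf"
    "P xce xad \<Longrightarrow> P xce xaf \<Longrightarrow> c xad = c xaf"
    "P xce xad \<Longrightarrow> P xce xbd \<Longrightarrow> c xad = c xbd"
    "P xce xad \<Longrightarrow> P xce xbf \<Longrightarrow> c xad = c xbf"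
    "P xce xad \<Longrightarrow> P xce xdf \<Longrightarrow> c xad = c xdf"
    "P xce xaf \<Longrightarrow> P xce xbd \<Longrightarrow> c xaf = c xbd"
    "P xce xaf \<Longrightarrow> P xce xbf \<Longrightarrow> c xaf = c xbf"
    "P xce xaf \<Longrightarrow> P xce xdf \<Longrightarrow> c xaf = c xdf"
    "P xce xbd \<Longrightarrow> P xce xbf \<Longrightarrow> c xbd = c xbf"
    "P xce xbd \<Longrightarrow> P xce xdf \<Longrightarrow> c xbd = c xdf"
    "P xce xbf \<Longrightarrow> P xce xdf \<Longrightarrow> c xbf = c xdf"
    "P xcf xab \<Longrightarrow> P xcf xad \<Longrightarrow> c xab = c xad"
    "P xcf xab \<Longrightarrow> P xcf xae \<Longrightarrow> c xab = c xae"
    "P xcf xab \<Longrightarrow> P xcf xbd \<Longrightarrow> c xab = c xbd"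
    "P xcf xab \<Longrightarrow> P xcf xbe \<Longrightarrow> c xab = c xbe"
    "P xcf xab \<Longrightarrow> P xcf xde \<Longrightarrow> c xab = c xde"
    "P xcf xad \<Longrightarrow> P xcf xae \<Longrightarrow> c xad = c xae"
    "P xcf xad \<Longrightarrow> P xcf xbd \<Longrightarrow> c xad = c xbd"
    "P xcf xad \<Longrightarrow> P xcf xbe \<Longrightarrow> c xad = c xbe"
    "P xcf xad \<Longrightarrow> P xcf xde \<Longrightarrow> c xad = c xde"
    "P xcf xae \<Longrightarrow> P xcf xbd \<Longrightarrow> c xae = c xbd"
    "P xcf xae \<Longrightarrow> P xcf xbe \<Longrightarrow> c xae = c xbe"
    "P xcf xae \<Longrightarrow> P xcf xde \<Longrightarrow> c xae = c xde"
    "P xcf xbd \<Longrightarrow> P xcf xbe \<Longrightarrow> c xbd = c xbe"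
    "P xcf xbd \<Longrightarrow> P xcf xde \<Longrightarrow> c xbd = c xde"
    "P xcf xbe \<Longrightarrow> P xcf xde \<Longrightarrow> c xbe = c xde"
    "P xde xab \<Longrightarrow> P xde xac \<Longrightarrow> c xab = c xac"
    "P xde xab \<Longrightarrow> P xde xaf \<Longrightarrow> c xab = c xaf"
    "P xde xab \<Longrightarrow> P xde xbc \<Longrightarrow> c xab = c xbc"
    "P xde xab \<Longrightarrow> P xde xbf \<Longrightarrow> c xab = c xbf"
    "P xde xab \<Longrightarrow> P xde xcf \<Longrightarrow> c xab = c xcf"
    "P xde xac \<Longrightarrow> P xde xaf \<Longrightarrow> c xac = c xaf"
    "P xde xac \<Longrightarrow> P xde xbc \<Longrightarrow> c xac = c xbc"
    "P xde xac \<Longrightarrow> P xde xbf \<Longrightarrow> c xac = c xbf"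
    "P xde xac \<Longrightarrow> P xde xcf \<Longrightarrow> c xac = c xcf"
    "P xde xaf \<Longrightarrow> P xde xbc \<Longrightarrow> c xaf = c xbc"
    "P xde xaf \<Longrightarrow> P xde xbf \<Longrightarrow> c xaf = c xbf"
    "P xde xaf \<Longrightarrow> P xde xcf \<Longrightarrow> c xaf = c xcf"
    "P xde xbc \<Longrightarrow> P xde xbf \<Longrightarrow> c xbc = c xbf"
    "P xde xbc \<Longrightarrow> P xde xcf \<Longrightarrow> c xbc = c xcf"
    "P xde xbf \<Longrightarrow> P xde xcf \<Longrightarrow> c xbf = c xcf"
    "P xdf xab \<Longrightarrow> P xdf xac \<Longrightarrow> c xab = c xac"
    "P xdf xab \<Longrightarrow> P xdf xae \<Longrightarrow> c xab = c xae"
    "P xdf xab \<Longrightarrow> P xdf xbc \<Longrightarrow> c xab = c xbc"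
    "P xdf xab \<Longrightarrow> P xdf xbe \<Longrightarrow> c xab = c xbe"
    "P xdf xab \<Longrightarrow> P xdf xce \<Longrightarrow> c xab = c xce"
    "P xdf xac \<Longrightarrow> P xdf xae \<Longrightarrow> c xac = c xae"
    "P xdf xac \<Longrightarrow> P xdf xbc \<Longrightarrow> c xac = c xbc"
    "P xdf xac \<Longrightarrow> P xdf xbe \<Longrightarrow> c xac = c xbe"
    "P xdf xac \<Longrightarrow> P xdf xce \<Longrightarrow> c xac = c xce"
    "P xdf xae \<Longrightarrow> P xdf xbc \<Longrightarrow> c xae = c xbc"
    "P xdf xae \<Longrightarrow> P xdf xbe \<Longrightarrow> c xae = c xbe"
    "P xdf xae \<Longrightarrow> P xdf xce \<Longrightarrow> c xae = c xce"
    "P xdf xbc \<Longrightarrow> P xdf xbe \<Longrightarrow> c xbc = c xbe"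
    "P xdf xbc \<Longrightarrow> P xdf xce \<Longrightarrow> c xbc = c xce"
    "P xdf xbe \<Longrightarrow> P xdf xce \<Longrightarrow> c xbe = c xce"
    "P xef xab \<Longrightarrow> P xef xac \<Longrightarrow> c xab = c xac"
    "P xef xab \<Longrightarrow> P xef xad \<Longrightarrow> c xab = c xad"
    "P xef xab \<Longrightarrow> P xef xbc \<Longrightarrow> c xab = c xbc"
    "P xef xab \<Longrightarrow> P xef xbd \<Longrightarrow> c xab = c xbd"
    "P xef xab \<Longrightarrow> P xef xcd \<Longrightarrow> c xab = c xcd"
    "P xef xac \<Longrightarrow> P xef xad \<Longrightarrow> c xac = c xad"
    "P xef xac \<Longrightarrow> P xef xbc \<Longrightarrow> c xac = c xbc"
    "P xef xac \<Longrightarrow> P xef xbd \<Longrightarrow> c xac = c xbd"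
    "P xef xac \<Longrightarrow> P xef xcd \<Longrightarrow> c xac = c xcd"
    "P xef xad \<Longrightarrow> P xef xbc \<Longrightarrow> c xad = c xbc"
    "P xef xad \<Longrightarrow> P xef xbd \<Longrightarrow> c xad = c xbd"
    "P xef xad \<Longrightarrow> P xef xcd \<Longrightarrow> c xad = c xcd"
    "P xef xbc \<Longrightarrow> P xef xbd \<Longrightarrow> c xbc = c xbd"
    "P xef xbc \<Longrightarrow> P xef xcd \<Longrightarrow> c xbc = c xcd"
    "P xef xbd \<Longrightarrow> P xef xcd \<Longrightarrow> c xbd = c xcd"
  shows False
  using h1 h2 h3 by (smt (z3))

lemma pair_mem:
  assumes "(x::nat) < y" "x \<in> {1..6}" "y \<in> {1..6}"
  shows "{x,y} \<in> {{1,2}, {1,3}, {1,4}, {1,5}, {1,6}, {2,3}, {2,4}, {2,5}, {2,6}, {3,4}, {3,5}, {3,6}, {4,5}, {4,6}, {5,6}}"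
proof -
  have "x = 1 \<or> x = 2 \<or> x = 3 \<or> x = 4 \<or> x = 5 \<or> x = 6"
       "y = 1 \<or> y = 2 \<or> y = 3 \<or> y = 4 \<or> y = 5 \<or> y = 6" using assms by auto
  then show ?thesis using assms(1)
    by (elim disjE; hypsubst; ((intro insertI1 insertI2; fail) | simp))
qed

lemma V_eq: "kneser_vertices 6 2 = {{1,2}, {1,3}, {1,4}, {1,5}, {1,6}, {2,3}, {2,4}, {2,5}, {2,6}, {3,4}, {3,5}, {3,6}, {4,5}, {4,6}, {5,6}}"
proof
  show "kneser_vertices 6 2 \<subseteq> {{1,2}, {1,3}, {1,4}, {1,5}, {1,6}, {2,3}, {2,4}, {2,5}, {2,6}, {3,4}, {3,5}, {3,6}, {4,5}, {4,6}, {5,6}}"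
  proof
    fix S assume "S \<in> kneser_vertices 6 2"
    then have S: "S \<subseteq> {1..6}" "card S = 2" by (auto simp: kneser_vertices_def)
    then obtain x y where xy: "S = {x,y}" "x \<noteq> y" by (meson card_2_iff)
    show "S \<in> {{1,2}, {1,3}, {1,4}, {1,5}, {1,6}, {2,3}, {2,4}, {2,5}, {2,6}, {3,4}, {3,5}, {3,6}, {4,5}, {4,6}, {5,6}}"
    proof (cases "x < y")
      case True then show ?thesis using S xy pair_mem[of x y] by auto
    next
      case False then have "y < x" using xy by simp
      then show ?thesis using S xy pair_mem[of y x] by (auto simp: insert_commute)
    qed
  qed
  show "{{1,2}, {1,3}, {1,4}, {1,5}, {1,6}, {2,3}, {2,4}, {2,5}, {2,6}, {3,4}, {3,5}, {3,6}, {4,5}, {4,6}, {5,6}} \<subseteq> kneser_vertices 6 2"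
    by (simp add: kneser_vertices_def)
qed

lemma finV: "finite (kneser_vertices 6 2)"
  by (simp add: V_eq)

lemma three_le:
  assumes "finite S" "card S \<le> 2" "x \<in> S" "y \<in> S" "z \<in> S" "x \<noteq> y" "x \<noteq> z"
  shows "y = z"
proof (rule ccontr)
  assume "y \<noteq> z"
  then have "card {x,y,z} = 3" using assms by auto
  moreover have "card {x,y,z} \<le> card S" using assms by (intro card_mono) auto
  ultimately show False using assms by simp
qed

lemma lower:
  assumes o: "is_orientation (kneser_vertices 6 2) kneser_adj A"
    and p: "proper_coloring_digraph (kneser_vertices 6 2) A c"
    and b: "\<forall>v\<in>kneser_vertices 6 2. card (c ` out_closed_nbhd A v) \<le> 2"
  shows False
proof -
  let ?V = "kneser_vertices 6 2"
  have L1: "(u,w) \<in> A \<or> (w,u) \<in> A" if "u \<in> ?V" "w \<in> ?V" "u \<inter> w = {}" for u w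
    using o that unfolding is_orientation_def kneser_adj_def by blast
  have L2: "c u \<noteq> c w" if "u \<in> ?V" "w \<in> ?V" "u \<inter> w = {}" for u w
    using L1[OF that] p that unfolding proper_coloring_digraph_def by blast
  have AV: "A \<subseteq> ?V \<times> ?V" using o unfolding is_orientation_def by auto
  have L3: "c w = c w'" if "v \<in> ?V" "w \<in> ?V" "w' \<in> ?V" "(v,w) \<in> A" "(v,w') \<in> A" for v w w'
  proof -
    have "out_closed_nbhd A v \<subseteq> ?V" using AV that(1) unfolding out_closed_nbhd_def by auto
    then have fin: "finite (c ` out_closed_nbhd A v)" using finV finite_subset by blast
    show ?thesis
    proof (rule three_le[OF fin b[rule_format, OF that(1)]])
      show "c v \<in> c ` out_closed_nbhd A v" "c w \<in> c ` out_closed_nbhd A v" "c w' \<in> c ` out_closed_nbhd A v"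
        using that unfolding out_closed_nbhd_def by auto
      show "c v \<noteq> c w" "c v \<noteq> c w'" using p that unfolding proper_coloring_digraph_def by auto
    qed
  qed
  show False
    apply (rule big[where P="\<lambda>u w. (u,w) \<in> A" and c=c and xab="{1,2}" and xac="{1,3}" and xad="{1,4}" and xae="{1,5}" and xaf="{1,6}" and xbc="{2,3}" and xbd="{2,4}" and xbe="{2,5}" and xbf="{2,6}" and xcd="{3,4}" and xce="{3,5}" and xcf="{3,6}" and xde="{4,5}" and xdf="{4,6}" and xef="{5,6}"])
    apply (rule L1 L2 L3; simp add: kneser_vertices_def)+
    done
qed

definition c0 :: "nat set \<Rightarrow> nat" where "c0 S = min (Min S) 4"

definition R0 :: "nat \<Rightarrow> nat \<Rightarrow> bool" where
  "R0 a b \<longleftrightarrow> (a = 1 \<and> b = 4) \<or> (b < a \<and> \<not> (a = 4 \<and> b = 1))"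

definition A0 :: "(nat set \<times> nat set) set" where
  "A0 = {(u,w). u \<in> kneser_vertices 6 2 \<and> w \<in> kneser_vertices 6 2 \<and> u \<inter> w = {} \<and> R0 (c0 u) (c0 w)}"

definition oc :: "nat \<Rightarrow> nat set" where
  "oc k = (if k = 1 then {4} else if k = 2 then {1} else if k = 3 then {1,2} else {2,3})"

lemma c0_range:
  assumes "u \<in> kneser_vertices 6 2" shows "c0 u \<in> {1,2,3,4}"
proof -
  have u: "u \<subseteq> {1..6}" "card u = 2" using assms by (auto simp: kneser_vertices_def)
  then have "finite u" "u \<noteq> {}" by (auto intro: finite_subset)
  then have "Min u \<in> u" by simp
  then have "Min u \<ge> 1" using u by auto
  then have "c0 u \<ge> 1" "c0 u \<le> 4" by (auto simp: c0_def)
  then show ?thesis by auto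
qed

lemma c0_proper:
  assumes "u \<in> kneser_vertices 6 2" "w \<in> kneser_vertices 6 2" "u \<inter> w = {}"
  shows "c0 u \<noteq> c0 w"
proof
  assume eq: "c0 u = c0 w"
  have u: "u \<subseteq> {1..6}" "card u = 2" using assms by (auto simp: kneser_vertices_def)
  have w: "w \<subseteq> {1..6}" "card w = 2" using assms by (auto simp: kneser_vertices_def)
  have fu: "finite u" "u \<noteq> {}" using u by (auto intro: finite_subset)
  have fw: "finite w" "w \<noteq> {}" using w by (auto intro: finite_subset)
  have mu: "Min u \<in> u" "\<forall>x\<in>u. Min u \<le> x" using fu by auto
  have mw: "Min w \<in> w" "\<forall>x\<in>w. Min w \<le> x" using fw by auto
  show False
  proof (cases "Min u < 4 \<or> Min w < 4")
    case True
    then have "Min u = Min w" using eq unfolding c0_def by auto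
    then show False using mu mw assms(3) by auto
  next
    case False
    have h: "x \<in> {4,5,6}" if x: "x \<in> u \<union> w" for x
    proof -
      have "Min u \<le> x \<or> Min w \<le> x" using x mu(2) mw(2) by blast
      then have "4 \<le> x" using False by linarith
      moreover have "x \<le> 6" using x u(1) w(1) by auto
      ultimately show ?thesis by auto
    qed
    then have "u \<union> w \<subseteq> {4,5,6}" by blast
    then have "card (u \<union> w) \<le> card {4,5,6::nat}" by (intro card_mono) auto
    moreover have "card (u \<union> w) = 4" using card_Un_disjoint[OF fu(1) fw(1) assms(3)] u w by simp
    ultimately show False by simp
  qed
qed

lemma R0_asym: "a \<in> {1,2,3,4} \<Longrightarrow> b \<in> {1,2,3,4} \<Longrightarrow> a \<noteq> b \<Longrightarrow> R0 a b \<longleftrightarrow> \<not> R0 b a"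
  unfolding R0_def by auto

lemma R0_oc: "k \<in> {1,2,3,4} \<Longrightarrow> j \<in> {1,2,3,4} \<Longrightarrow> R0 k j \<Longrightarrow> j \<in> oc k"
  unfolding R0_def oc_def by auto

lemma card_oc: "k \<in> {1,2,3,4} \<Longrightarrow> card (insert k (oc k)) \<le> 3"
  unfolding oc_def by auto

lemma A0_orient: "is_orientation (kneser_vertices 6 2) kneser_adj A0"
  unfolding is_orientation_def
proof (intro conjI ballI impI)
  show "A0 \<subseteq> {(u, v). u \<in> kneser_vertices 6 2 \<and> v \<in> kneser_vertices 6 2 \<and> kneser_adj u v}"
    unfolding A0_def kneser_adj_def by auto
  fix u v assume uv: "u \<in> kneser_vertices 6 2" "v \<in> kneser_vertices 6 2" "kneser_adj u v"
  then have d: "u \<inter> v = {}" "v \<inter> u = {}" unfolding kneser_adj_def by auto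
  have "R0 (c0 u) (c0 v) \<longleftrightarrow> \<not> R0 (c0 v) (c0 u)"
    using R0_asym c0_range c0_proper uv(1,2) d(1) by blast
  then show "((u, v) \<in> A0) = ((v, u) \<notin> A0)" unfolding A0_def using uv d by auto
qed

lemma A0_proper: "proper_coloring_digraph (kneser_vertices 6 2) A0 c0"
  unfolding proper_coloring_digraph_def A0_def using c0_proper by blast

lemma A0_card: "v \<in> kneser_vertices 6 2 \<Longrightarrow> card (c0 ` out_closed_nbhd A0 v) \<le> 3"
proof -
  assume v: "v \<in> kneser_vertices 6 2"
  have "c0 ` out_closed_nbhd A0 v \<subseteq> insert (c0 v) (oc (c0 v))"
  proof
    fix j assume "j \<in> c0 ` out_closed_nbhd A0 v"
    then obtain u where "u \<in> out_closed_nbhd A0 v" "j = c0 u" by auto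
    then have "u = v \<or> ((v,u) \<in> A0)" unfolding out_closed_nbhd_def by auto
    then show "j \<in> insert (c0 v) (oc (c0 v))"
    proof
      assume "u = v" then show ?thesis using \<open>j = c0 u\<close> by simp
    next
      assume "(v,u) \<in> A0"
      then have "u \<in> kneser_vertices 6 2" "R0 (c0 v) (c0 u)" unfolding A0_def by auto
      then show ?thesis using R0_oc c0_range v \<open>j = c0 u\<close> by blast
    qed
  qed
  then have "card (c0 ` out_closed_nbhd A0 v) \<le> card (insert (c0 v) (oc (c0 v)))"
    by (intro card_mono) (auto simp: oc_def)
  also have "\<dots> \<le> 3" using card_oc c0_range v by blast
  finally show ?thesis .
qed

lemma psi_ge3:
  assumes o: "is_orientation (kneser_vertices 6 2) kneser_adj A"
  shows "3 \<le> psi_d (kneser_vertices 6 2) A"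
proof -
  let ?V = "kneser_vertices 6 2"
  let ?Q = "\<lambda>k. \<exists>c. proper_coloring_digraph ?V A c \<and> (\<forall>v\<in>?V. card (c ` out_closed_nbhd A v) \<le> k)"
  have "?Q 5"
  proof (intro exI conjI ballI)
    show "proper_coloring_digraph ?V A c0"
      using o c0_proper unfolding proper_coloring_digraph_def is_orientation_def kneser_adj_def
      by blast
    fix v
    have "c0 ` out_closed_nbhd A v \<subseteq> {..4}" by (auto simp: c0_def)
    then have "card (c0 ` out_closed_nbhd A v) \<le> card {..4::nat}" by (intro card_mono) auto
    then show "card (c0 ` out_closed_nbhd A v) \<le> 5" by simp
  qed
  then have "?Q (psi_d ?V A)" unfolding psi_d_def by (rule LeastI_ex[of ?Q, OF exI])
  then obtain c where c: "proper_coloring_digraph ?V A c"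
    "\<forall>v\<in>?V. card (c ` out_closed_nbhd A v) \<le> psi_d ?V A" by blast
  show ?thesis
  proof (rule ccontr)
    assume "\<not> 3 \<le> psi_d ?V A"
    then have "\<forall>v\<in>?V. card (c ` out_closed_nbhd A v) \<le> 2" using c(2) by force
    then show False using lower[OF o c(1)] by blast
  qed
qed

lemma psi_A0: "psi_d (kneser_vertices 6 2) A0 = 3"
proof (rule antisym)
  show "psi_d (kneser_vertices 6 2) A0 \<le> 3"
    unfolding psi_d_def using A0_proper A0_card by (intro Least_le) blast
  show "3 \<le> psi_d (kneser_vertices 6 2) A0" by (rule psi_ge3[OF A0_orient])
qed

theorem mainTheorem4:
  shows "psi_d_min (kneser_vertices 6 2) kneser_adj = 3"
  unfolding psi_d_min_def
proof (rule Least_equality)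
  show "\<exists>A. is_orientation (kneser_vertices 6 2) kneser_adj A \<and> psi_d (kneser_vertices 6 2) A = 3"
    using A0_orient psi_A0 by blast
  fix k assume "\<exists>A. is_orientation (kneser_vertices 6 2) kneser_adj A \<and> psi_d (kneser_vertices 6 2) A = k"
  then show "3 \<le> k" using psi_ge3 by blast
qed

end
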